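(* Let $G$ be a SIN topological group and $\xi=(E\xrightarrow{p}X)$ a numerable principal $G$-bundle with gauge group $\mathcal G$. Then $\mathcal G$, endowed with the uniform structure $\mathbf U_{\mathcal G}$, is a topological group. Moreover, $\mathcal G$ is then SIN.
   Context: A topological group is SIN if its identity element has a fundamental system of neighbourhoods invariant under conjugation. The gauge group $\mathcal G$ is the group of $G$-equivariant homeomorphisms $\chi:E\to E$ with $p\circ\chi=p$. Let $\gamma:E\times_XE\to G$ be defined by $y=z\cdot\gamma(y,z)$. Let $\mathcal V_G$ be the set of open sets $V\subset G$ containing the identity with $V=V^{-1}$. For $K\subset X$ compact and $V\in\mathcal V_G$ let $\mathcal O^{\mathcal G}(K,V)=\{(\chi,\tilde\chi)\in\mathcal G\times\mathcal G:\gamma(\chi(z),\tilde\chi(z))\in V\ \forall z\in p^{-1}(K)\}$. $\mathbf U_{\mathcal G}$ is the uniform structure on $\mathcal G$ having these sets as a fundamental system of entourages; $\mathcal G$ carries the induced topology. *)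

theory Defs
  imports "HOL-Analysis.Analysis"
begin

(* The structure group G is a type 'g of class topological_group_add
   (group written additively, not necessarily commutative; no separation axiom). *)

definition nbhd_of :: "'a topology \<Rightarrow> 'a \<Rightarrow> 'a set \<Rightarrow> bool" where
  "nbhd_of T e N \<longleftrightarrow> (\<exists>U. openin T U \<and> e \<in> U \<and> U \<subseteq> N)"

definition topological_group_on ::
  "'a topology \<Rightarrow> ('a \<Rightarrow> 'a \<Rightarrow> 'a) \<Rightarrow> ('a \<Rightarrow> 'a) \<Rightarrow> 'a \<Rightarrow> bool" where
  "topological_group_on T m i e \<longleftrightarrow>
     e \<in> topspace T \<and>
     (\<forall>a\<in>topspace T. \<forall>b\<in>topspace T. \<forall>c\<in>topspace T. m (m a b) c = m a (m b c)) \<and>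
     (\<forall>a\<in>topspace T. m e a = a \<and> m a e = a \<and> m (i a) a = e \<and> m a (i a) = e) \<and>
     continuous_map (prod_topology T T) T (\<lambda>(a, b). m a b) \<and>
     continuous_map T T i"

definition SIN_on ::
  "'a topology \<Rightarrow> ('a \<Rightarrow> 'a \<Rightarrow> 'a) \<Rightarrow> ('a \<Rightarrow> 'a) \<Rightarrow> 'a \<Rightarrow> bool" where
  "SIN_on T m i e \<longleftrightarrow>
     (\<forall>N. nbhd_of T e N \<longrightarrow>
        (\<exists>W. nbhd_of T e W \<and> W \<subseteq> N \<and>
             (\<forall>g\<in>topspace T. (\<lambda>w. m (m g w) (i g)) ` W = W)))"

definition right_action :: "('e::topological_space \<Rightarrow> 'g::topological_group_add \<Rightarrow> 'e) \<Rightarrow> bool" where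
  "right_action act \<longleftrightarrow>
     (\<forall>z. act z 0 = z) \<and> (\<forall>z g h. act (act z g) h = act z (g + h)) \<and>
     continuous_on UNIV (\<lambda>(z, g). act z g)"

definition trivial_over ::
  "('e::topological_space \<Rightarrow> 'x::topological_space) \<Rightarrow> ('e \<Rightarrow> 'g::topological_group_add \<Rightarrow> 'e)
   \<Rightarrow> 'x set \<Rightarrow> bool" where
  "trivial_over p act U \<longleftrightarrow>
     (\<exists>\<phi> \<psi>. homeomorphism (U \<times> (UNIV :: 'g set)) (p -` U) \<phi> \<psi> \<and>
        (\<forall>x\<in>U. \<forall>g. p (\<phi> (x, g)) = x) \<and>
        (\<forall>x\<in>U. \<forall>g h. \<phi> (x, g + h) = act (\<phi> (x, g)) h))"

definition principal_bundle ::
  "('e::topological_space \<Rightarrow> 'x::topological_space) \<Rightarrow> ('e \<Rightarrow> 'g::topological_group_add \<Rightarrow> 'e) \<Rightarrow> bool" where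
  "principal_bundle p act \<longleftrightarrow>
     right_action act \<and> continuous_on UNIV p \<and>
     (\<forall>z g. p (act z g) = p z) \<and>
     (\<forall>x. \<exists>U. open U \<and> x \<in> U \<and> trivial_over p act U)"

definition numerable_cover :: "'x::topological_space set set \<Rightarrow> bool" where
  "numerable_cover \<U> \<longleftrightarrow>
     (\<forall>U\<in>\<U>. open U) \<and>
     (\<exists>f :: 'x set \<Rightarrow> 'x \<Rightarrow> real.
        (\<forall>U\<in>\<U>. continuous_on UNIV (f U) \<and> (\<forall>x. 0 \<le> f U x) \<and> {x. 0 < f U x} \<subseteq> U) \<and>
        (\<forall>x. \<exists>N. open N \<and> x \<in> N \<and> finite {U\<in>\<U>. \<exists>y\<in>N. f U y \<noteq> 0}) \<and>
        (\<forall>x. (\<Sum>U\<in>{U\<in>\<U>. f U x \<noteq> 0}. f U x) = 1))"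

definition numerable_principal_bundle ::
  "('e::topological_space \<Rightarrow> 'x::topological_space) \<Rightarrow> ('e \<Rightarrow> 'g::topological_group_add \<Rightarrow> 'e) \<Rightarrow> bool" where
  "numerable_principal_bundle p act \<longleftrightarrow>
     principal_bundle p act \<and>
     (\<exists>\<U>. numerable_cover \<U> \<and> (\<forall>U\<in>\<U>. trivial_over p act U))"

definition gamma :: "('e \<Rightarrow> 'g \<Rightarrow> 'e) \<Rightarrow> 'e \<Rightarrow> 'e \<Rightarrow> 'g" where
  "gamma act y z = (THE g. y = act z g)"

definition gauge_group :: "('e::topological_space \<Rightarrow> 'x) \<Rightarrow> ('e \<Rightarrow> 'g \<Rightarrow> 'e) \<Rightarrow> ('e \<Rightarrow> 'e) set" where
  "gauge_group p act = {c. (\<exists>\<psi>. homeomorphism UNIV UNIV c \<psi>) \<and>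
                      (\<forall>z g. c (act z g) = act (c z) g) \<and> p \<circ> c = p}"

definition VG :: "'g::topological_group_add set set" where
  "VG = {V. open V \<and> 0 \<in> V \<and> uminus ` V = V}"

definition gauge_entourage ::
  "('e::topological_space \<Rightarrow> 'x) \<Rightarrow> ('e \<Rightarrow> 'g \<Rightarrow> 'e) \<Rightarrow> 'x set \<Rightarrow> 'g set \<Rightarrow> (('e \<Rightarrow> 'e) \<times> ('e \<Rightarrow> 'e)) set" where
  "gauge_entourage p act K V =
     {(c, c'). c \<in> gauge_group p act \<and> c' \<in> gauge_group p act \<and>
                (\<forall>z \<in> p -` K. gamma act (c z) (c' z) \<in> V)}"

(* openness in the topology induced by the uniform structure U_G generated by the
   fundamental system of entourages O^G(K,V), K \<subseteq> X compact, V \<in> V_G *)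
definition gauge_open ::
  "('e::topological_space \<Rightarrow> 'x::topological_space) \<Rightarrow> ('e \<Rightarrow> 'g::topological_group_add \<Rightarrow> 'e) \<Rightarrow> ('e \<Rightarrow> 'e) set \<Rightarrow> bool" where
  "gauge_open p act S \<longleftrightarrow>
     S \<subseteq> gauge_group p act \<and>
     (\<forall>c\<in>S. \<exists>K V. compact K \<and> V \<in> VG \<and> {c'. (c, c') \<in> gauge_entourage p act K V} \<subseteq> S)"

definition gauge_topology ::
  "('e::topological_space \<Rightarrow> 'x::topological_space) \<Rightarrow> ('e \<Rightarrow> 'g::topological_group_add \<Rightarrow> 'e) \<Rightarrow> ('e \<Rightarrow> 'e) topology" where
  "gauge_topology p act = topology (gauge_open p act)"

end

theory Submission imports Defs begin
lemma VG_half: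
  fixes V :: "'g::topological_group_add set"
  assumes "V \<in> VG"
  shows "\<exists>W\<in>VG. W \<subseteq> V \<and> (\<forall>a\<in>W. \<forall>b\<in>W. a + b \<in> V)"
proof -
  have o: "open V" "0 \<in> V" using assms by (auto simp: VG_def)
  have "((\<lambda>x. fst x + snd x) \<longlongrightarrow> (0::'g) + 0) (nhds 0 \<times>\<^sub>F nhds 0)"
    by (rule tendsto_add_Pair)
  hence "eventually (\<lambda>x. fst x + snd x \<in> V) (nhds 0 \<times>\<^sub>F nhds (0::'g))"
    using o by (simp add: tendsto_def)
  then obtain Pf Pg where P: "eventually Pf (nhds (0::'g))" "eventually Pg (nhds 0)"
     "\<forall>x y. Pf x \<longrightarrow> Pg y \<longrightarrow> x + y \<in> V"
    unfolding eventually_prod_filter by auto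
  obtain A where A: "open A" "0 \<in> A" "\<forall>x\<in>A. Pf x" using P(1) unfolding eventually_nhds by auto
  obtain B where B: "open B" "0 \<in> B" "\<forall>x\<in>B. Pg x" using P(2) unfolding eventually_nhds by auto
  define C where "C = A \<inter> B \<inter> V"
  define W where "W = C \<inter> uminus ` C"
  have "uminus ` C = uminus -` C" by (force simp: image_iff)
  moreover have "open (uminus -` C)"
  proof -
    have "continuous_on UNIV (uminus::'g\<Rightarrow>'g)" by (intro continuous_intros)
    moreover have "open C" using A B o by (auto simp: C_def)
    ultimately show ?thesis using continuous_on_open_vimage[of UNIV "uminus::'g\<Rightarrow>'g"] by auto
  qed
  ultimately have "open (uminus ` C)" by simp
  hence oW: "open W" unfolding W_def C_def using A B o by auto
  have "0 \<in> W" unfolding W_def C_def using A B o by (auto intro: image_eqI[where x=0])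
  moreover have "uminus ` W = W"
  proof -
    have "uminus ` W = uminus ` C \<inter> uminus ` uminus ` C"
      unfolding W_def by (rule image_Int) (simp add: inj_def)
    also have "uminus ` uminus ` C = C" by (simp add: image_image)
    finally show ?thesis unfolding W_def by blast
  qed
  ultimately have "W \<in> VG" using oW by (simp add: VG_def)
  moreover have "W \<subseteq> V" unfolding W_def C_def by auto
  moreover have "\<forall>a\<in>W. \<forall>b\<in>W. a + b \<in> V" using A B P(3) unfolding W_def C_def by auto
  ultimately show ?thesis by blast
qed

lemma pb_fibre:
  fixes p :: "'e::topological_space \<Rightarrow> 'x::topological_space"
    and act :: "'e \<Rightarrow> 'g::topological_group_add \<Rightarrow> 'e"
  assumes "principal_bundle p act"
  shows pb_trans: "p y = p z \<Longrightarrow> \<exists>g. y = act z g"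
    and pb_free: "act z g = act z h \<Longrightarrow> g = h"
proof -
  obtain U where U: "open U" "p z \<in> U" "trivial_over p act U"
    using assms unfolding principal_bundle_def by blast
  then obtain \<phi> \<psi> where H: "homeomorphism (U \<times> (UNIV :: 'g set)) (p -` U) \<phi> \<psi>"
     and Hp: "\<forall>x\<in>U. \<forall>g. p (\<phi> (x, g)) = x"
     and Ha: "\<forall>x\<in>U. \<forall>g h. \<phi> (x, g + h) = act (\<phi> (x, g)) h"
    unfolding trivial_over_def by blast
  have rep: "\<And>w. p w \<in> U \<Longrightarrow> w = \<phi> (p w, snd (\<psi> w)) \<and> \<psi> w \<in> U \<times> UNIV"
  proof -
    fix w assume w: "p w \<in> U"
    have m: "\<psi> w \<in> U \<times> UNIV" using H w unfolding homeomorphism_def by blast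
    have f: "\<phi> (\<psi> w) = w" using H w unfolding homeomorphism_def by auto
    obtain u k where uk: "\<psi> w = (u, k)" by fastforce
    have "u \<in> U" using m uk by auto
    hence "p w = u" using Hp f uk by metis
    thus "w = \<phi> (p w, snd (\<psi> w)) \<and> \<psi> w \<in> U \<times> UNIV" using f uk m by simp
  qed
  obtain g0 where z0: "z = \<phi> (p z, g0)" using rep U(2) by blast
  show "p y = p z \<Longrightarrow> \<exists>g. y = act z g"
  proof -
    assume e: "p y = p z"
    obtain g1 where y1: "y = \<phi> (p z, g1)" using rep[of y] U(2) e by auto
    have "\<phi> (p z, g0 + (- g0 + g1)) = act (\<phi> (p z, g0)) (- g0 + g1)" using Ha U(2) by blast
    hence "y = act z (- g0 + g1)" using y1 z0 by (simp add: add.assoc[symmetric])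
    thus ?thesis by blast
  qed
  show "act z g = act z h \<Longrightarrow> g = h"
  proof -
    assume e: "act z g = act z h"
    have "\<phi> (p z, g0 + g) = \<phi> (p z, g0 + h)" using Ha U(2) z0 e by metis
    hence "\<psi> (\<phi> (p z, g0 + g)) = \<psi> (\<phi> (p z, g0 + h))" by simp
    moreover have "\<And>k. \<psi> (\<phi> (p z, k)) = (p z, k)" using H U(2) unfolding homeomorphism_def by auto
    ultimately show "g = h" by simp
  qed
qed

lemma gamma_eq:
  assumes "principal_bundle p act" "y = act z g"
  shows "gamma act y z = g"
  unfolding gamma_def using assms pb_free[OF assms(1)] by (intro the_equality) auto

lemma gamma_prop:
  assumes "principal_bundle p act" "p y = p z"
  shows "y = act z (gamma act y z)"
  using pb_trans[OF assms] gamma_eq[OF assms(1)] by metis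


lemma ra_act:
  assumes "principal_bundle p act"
  shows "act z 0 = z" "act (act z g) h = act z (g + h)"
  using assms unfolding principal_bundle_def right_action_def by auto

lemma gg_basic:
  assumes "c \<in> gauge_group p act"
  shows "c (inv c z) = z" "inv c (c z) = z" "p (c z) = p z" "c (act z g) = act (c z) g"
    and "bij c"
proof -
  obtain \<psi> where h: "homeomorphism UNIV UNIV c \<psi>" using assms unfolding gauge_group_def by auto
  hence "\<And>x. \<psi> (c x) = x" "\<And>x. c (\<psi> x) = x" unfolding homeomorphism_def by auto
  thus b: "bij c" by (metis bijI' )
  show "c (inv c z) = z" using b by (simp add: bij_is_surj surj_f_inv_f)
  show "inv c (c z) = z" using b by (simp add: bij_is_inj)
  show "p (c z) = p z" "c (act z g) = act (c z) g" using assms unfolding gauge_group_def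
    by (auto simp: fun_eq_iff)
qed

lemma gg_inv:
  assumes "c \<in> gauge_group p act"
  shows "inv c \<in> gauge_group p act"
proof -
  obtain \<psi> where h: "homeomorphism UNIV UNIV c \<psi>" using assms unfolding gauge_group_def by auto
  hence l: "\<And>x. \<psi> (c x) = x" "\<And>x. c (\<psi> x) = x" unfolding homeomorphism_def by auto
  have "inv c = \<psi>" using l by (metis inv_equality ext)
  hence "homeomorphism UNIV UNIV (inv c) c" using h homeomorphism_sym by metis
  moreover have "inv c (act z g) = act (inv c z) g" for z g
    using gg_basic[OF assms] by metis
  moreover have "p (inv c z) = p z" for z using gg_basic[OF assms] by metis
  ultimately show ?thesis unfolding gauge_group_def by (auto simp: fun_eq_iff)
qed

lemma gg_comp:
  assumes "c \<in> gauge_group p act" "d \<in> gauge_group p act"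
  shows "c \<circ> d \<in> gauge_group p act"
proof -
  obtain \<psi> where h: "homeomorphism UNIV UNIV c \<psi>" using assms unfolding gauge_group_def by auto
  obtain \<psi>' where h': "homeomorphism UNIV UNIV d \<psi>'" using assms unfolding gauge_group_def by auto
  have "homeomorphism UNIV UNIV (c \<circ> d) (\<psi>' \<circ> \<psi>)"
    using homeomorphism_compose[OF h' h] by simp
  thus ?thesis using assms unfolding gauge_group_def by (auto simp: fun_eq_iff)
qed

lemma gg_id: "id \<in> gauge_group p act"
  unfolding gauge_group_def homeomorphism_def by auto

definition gball where
  "gball p act c K V = {c'. (c, c') \<in> gauge_entourage p act K V}"

lemma gball_iff:
  assumes "principal_bundle p act" "c \<in> gauge_group p act" "c' \<in> gauge_group p act"
  shows "c' \<in> gball p act c K V \<longleftrightarrow> (\<forall>z. p z \<in> K \<longrightarrow> (\<exists>g\<in>V. c z = act (c' z) g))"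
proof -
  have "\<And>z. p (c z) = p (c' z)" using gg_basic(3) assms by metis
  hence "\<And>z. (gamma act (c z) (c' z) \<in> V) \<longleftrightarrow> (\<exists>g\<in>V. c z = act (c' z) g)"
    using gamma_prop[OF assms(1)] gamma_eq[OF assms(1)] by metis
  thus ?thesis using assms unfolding gball_def gauge_entourage_def by auto
qed

lemma gball_G: "c' \<in> gball p act c K V \<Longrightarrow> c \<in> gauge_group p act \<and> c' \<in> gauge_group p act"
  unfolding gball_def gauge_entourage_def by auto

lemma gball_self:
  assumes "principal_bundle p act" "c \<in> gauge_group p act" "V \<in> VG"
  shows "c \<in> gball p act c K V"
  using assms gball_iff[OF assms(1,2,2)] ra_act[OF assms(1)] unfolding VG_def by (metis mem_Collect_eq)

lemma gball_trans:
  assumes "principal_bundle p act" "d \<in> gball p act c K W" "e \<in> gball p act d K W"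
    "\<forall>a\<in>W. \<forall>b\<in>W. a + b \<in> V"
  shows "e \<in> gball p act c K V"
proof -
  have G: "c \<in> gauge_group p act" "d \<in> gauge_group p act" "e \<in> gauge_group p act"
    using gball_G assms by blast+
  show ?thesis unfolding gball_iff[OF assms(1) G(1,3)]
  proof (intro allI impI)
    fix z assume "p z \<in> K"
    then obtain g1 g2 where "g1 \<in> W" "g2 \<in> W" "c z = act (d z) g1" "d z = act (e z) g2"
      using assms(2,3) gball_iff[OF assms(1) G(1,2)] gball_iff[OF assms(1) G(2,3)] by meson
    hence "c z = act (e z) (g2 + g1)" "g2 + g1 \<in> V" using ra_act[OF assms(1)] assms(4) by auto
    thus "\<exists>g\<in>V. c z = act (e z) g" by blast
  qed
qed

lemma gball_mono:
  assumes "K' \<subseteq> K" "V \<subseteq> V'"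
  shows "gball p act c K V \<subseteq> gball p act c K' V'"
  using assms unfolding gball_def gauge_entourage_def by auto


definition gint where
  "gint p act c K V = {d \<in> gauge_group p act. \<exists>K2 V2. compact K2 \<and> V2 \<in> VG \<and>
      gball p act d K2 V2 \<subseteq> gball p act c K V}"

lemma gint_open:
  assumes "principal_bundle p act"
  shows "gauge_open p act (gint p act c K V)"
  unfolding gauge_open_def
proof (intro conjI ballI)
  show "gint p act c K V \<subseteq> gauge_group p act" unfolding gint_def by auto
  fix d assume "d \<in> gint p act c K V"
  then obtain K2 V2 where d: "d \<in> gauge_group p act" "compact K2" "V2 \<in> VG"
     "gball p act d K2 V2 \<subseteq> gball p act c K V" unfolding gint_def by auto
  obtain W where W: "W \<in> VG" "W \<subseteq> V2" "\<forall>a\<in>W. \<forall>b\<in>W. a + b \<in> V2" using VG_half[OF d(3)] by blast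
  have "gball p act d K2 W \<subseteq> gint p act c K V"
  proof
    fix e assume e: "e \<in> gball p act d K2 W"
    have "gball p act e K2 W \<subseteq> gball p act d K2 V2"
      using gball_trans[OF assms e _ W(3)] by blast
    hence "gball p act e K2 W \<subseteq> gball p act c K V" using d(4) by blast
    moreover have "e \<in> gauge_group p act" using gball_G[OF e] by blast
    ultimately show "e \<in> gint p act c K V" using d(2) W(1) unfolding gint_def by blast
  qed
  thus "\<exists>K' V'. compact K' \<and> V' \<in> VG \<and> {c'. (d, c') \<in> gauge_entourage p act K' V'} \<subseteq> gint p act c K V"
    using d(2) W(1) unfolding gball_def by blast
qed

lemma gint_sub:
  assumes "principal_bundle p act"
  shows "gint p act c K V \<subseteq> gball p act c K V"
proof
  fix d assume "d \<in> gint p act c K V"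
  then obtain K2 V2 where d: "d \<in> gauge_group p act" "V2 \<in> VG"
     "gball p act d K2 V2 \<subseteq> gball p act c K V" unfolding gint_def by auto
  show "d \<in> gball p act c K V" using gball_self[OF assms d(1,2), of K2] d(3) by blast
qed

lemma gint_self:
  assumes "c \<in> gauge_group p act" "compact K" "V \<in> VG"
  shows "c \<in> gint p act c K V"
  using assms unfolding gint_def by blast

lemma VG_Int: "V1 \<in> VG \<Longrightarrow> V2 \<in> VG \<Longrightarrow> V1 \<inter> V2 \<in> VG"
proof -
  assume a: "V1 \<in> VG" "V2 \<in> VG"
  have "uminus ` (V1 \<inter> V2) = uminus ` V1 \<inter> uminus ` V2" by (rule image_Int) (simp add: inj_def)
  thus ?thesis using a unfolding VG_def by auto
qed

lemma VG_UNIV: "UNIV \<in> VG"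
  unfolding VG_def by (auto intro: surjI[of uminus uminus])

lemma gauge_istop: "istopology (gauge_open p act)"
  unfolding istopology_def
proof (intro conjI allI impI)
  fix S T assume S: "gauge_open p act S" and T: "gauge_open p act T"
  show "gauge_open p act (S \<inter> T)" unfolding gauge_open_def
  proof (intro conjI ballI)
    show "S \<inter> T \<subseteq> gauge_group p act" using S unfolding gauge_open_def by auto
    fix c assume "c \<in> S \<inter> T"
    hence cc: "c \<in> S" "c \<in> T" by auto
    obtain K1 V1 where k1: "compact K1" "V1 \<in> VG" "gball p act c K1 V1 \<subseteq> S"
      using S cc(1) unfolding gauge_open_def gball_def by meson
    obtain K2 V2 where k2: "compact K2" "V2 \<in> VG" "gball p act c K2 V2 \<subseteq> T"
      using T cc(2) unfolding gauge_open_def gball_def by meson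
    note k = k1 k2
    have "gball p act c (K1 \<union> K2) (V1 \<inter> V2) \<subseteq> S \<inter> T"
      using gball_mono[of K1 "K1 \<union> K2" "V1 \<inter> V2" V1] gball_mono[of K2 "K1 \<union> K2" "V1 \<inter> V2" V2] k
      by blast
    thus "\<exists>K V. compact K \<and> V \<in> VG \<and> {c'. (c, c') \<in> gauge_entourage p act K V} \<subseteq> S \<inter> T"
      using k VG_Int unfolding gball_def by (meson compact_Un)
  qed
next
  fix KK assume "\<forall>K\<in>KK. gauge_open p act K"
  hence a: "\<And>K. K \<in> KK \<Longrightarrow> gauge_open p act K" by blast
  show "gauge_open p act (\<Union>KK)" unfolding gauge_open_def
  proof (intro conjI ballI)
    show "\<Union>KK \<subseteq> gauge_group p act" using a unfolding gauge_open_def by blast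
    fix c assume "c \<in> \<Union>KK"
    then obtain K where K: "K \<in> KK" "c \<in> K" by blast
    then obtain K1 V1 where "compact K1" "V1 \<in> VG" "{c'. (c, c') \<in> gauge_entourage p act K1 V1} \<subseteq> K"
      using a[OF K(1)] unfolding gauge_open_def by meson
    thus "\<exists>K V. compact K \<and> V \<in> VG \<and> {c'. (c, c') \<in> gauge_entourage p act K V} \<subseteq> \<Union>KK"
      using K(1) by blast
  qed
qed

lemma gauge_openin: "openin (gauge_topology p act) = gauge_open p act"
  unfolding gauge_topology_def by (rule topology_inverse'[OF gauge_istop])

lemma gauge_topspace: "topspace (gauge_topology p act) = gauge_group p act"
proof -
  have "{c'. (c, c') \<in> gauge_entourage p act {} UNIV} \<subseteq> gauge_group p act" for c
    unfolding gauge_entourage_def by auto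
  hence "gauge_open p act (gauge_group p act)" unfolding gauge_open_def
    using VG_UNIV compact_empty by blast
  hence "gauge_group p act \<subseteq> topspace (gauge_topology p act)"
    unfolding topspace_def gauge_openin by blast
  moreover have "topspace (gauge_topology p act) \<subseteq> gauge_group p act"
    unfolding topspace_def gauge_openin gauge_open_def by blast
  ultimately show ?thesis by blast
qed


lemma gauge_open_local:
  assumes "S \<subseteq> gauge_group p act" "\<forall>c\<in>S. \<exists>U. gauge_open p act U \<and> c \<in> U \<and> U \<subseteq> S"
  shows "gauge_open p act S"
  unfolding gauge_open_def
proof (intro conjI ballI)
  show "S \<subseteq> gauge_group p act" by fact
  fix c assume "c \<in> S"
  then obtain U where U: "gauge_open p act U" "c \<in> U" "U \<subseteq> S" using assms(2) by blast
  then obtain K V where "compact K" "V \<in> VG" "{c'. (c, c') \<in> gauge_entourage p act K V} \<subseteq> U"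
    unfolding gauge_open_def by meson
  thus "\<exists>K V. compact K \<and> V \<in> VG \<and> {c'. (c, c') \<in> gauge_entourage p act K V} \<subseteq> S"
    using U(3) by blast
qed

lemma comp_nbhd:
  assumes pb: "principal_bundle p act" and G: "a \<in> gauge_group p act" "b \<in> gauge_group p act"
    and S: "gauge_open p act S" "a \<circ> b \<in> S"
  shows "\<exists>U1 U2. gauge_open p act U1 \<and> gauge_open p act U2 \<and> a \<in> U1 \<and> b \<in> U2 \<and>
           (\<forall>d1\<in>U1. \<forall>d2\<in>U2. d1 \<circ> d2 \<in> S)"
proof -
  obtain K V where KV: "compact K" "V \<in> VG" "gball p act (a \<circ> b) K V \<subseteq> S"
    using S unfolding gauge_open_def gball_def by meson
  obtain W where W: "W \<in> VG" "W \<subseteq> V" "\<forall>x\<in>W. \<forall>y\<in>W. x + y \<in> V" using VG_half[OF KV(2)] by blast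
  have "\<forall>d1\<in>gint p act a K W. \<forall>d2\<in>gint p act b K W. d1 \<circ> d2 \<in> S"
  proof (intro ballI)
    fix d1 d2 assume d1: "d1 \<in> gint p act a K W" and d2: "d2 \<in> gint p act b K W"
    hence b1: "d1 \<in> gball p act a K W" and b2: "d2 \<in> gball p act b K W"
      using gint_sub[OF pb] by blast+
    have dG: "d1 \<in> gauge_group p act" "d2 \<in> gauge_group p act" using gball_G b1 b2 by blast+
    have "d1 \<circ> d2 \<in> gball p act (a \<circ> b) K V"
      unfolding gball_iff[OF pb gg_comp[OF G] gg_comp[OF dG]]
    proof (intro allI impI)
      fix z assume z: "p z \<in> K"
      obtain h2 where h2: "h2 \<in> W" "b z = act (d2 z) h2"
        using b2 z unfolding gball_iff[OF pb G(2) dG(2)] by blast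
      have "p (b z) \<in> K" using z gg_basic(3)[OF G(2)] by metis
      then obtain h1 where h1: "h1 \<in> W" "a (b z) = act (d1 (b z)) h1"
        using b1 unfolding gball_iff[OF pb G(1) dG(1)] by blast
      have "d1 (b z) = act (d1 (d2 z)) h2" using h2(2) gg_basic(4)[OF dG(1)] by metis
      hence "a (b z) = act (d1 (d2 z)) (h2 + h1)" using h1(2) ra_act[OF pb] by metis
      thus "\<exists>g\<in>V. (a \<circ> b) z = act ((d1 \<circ> d2) z) g" using W(3) h1(1) h2(1) by auto
    qed
    thus "d1 \<circ> d2 \<in> S" using KV(3) by blast
  qed
  thus ?thesis using gint_open[OF pb] gint_self[OF G(1) KV(1) W(1)] gint_self[OF G(2) KV(1) W(1)]
    by blast
qed

lemma inv_nbhd: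
  assumes pb: "principal_bundle p act" and G: "c \<in> gauge_group p act"
    and S: "gauge_open p act S" "inv c \<in> S"
  shows "\<exists>U. gauge_open p act U \<and> c \<in> U \<and> (\<forall>d\<in>U. inv d \<in> S)"
proof -
  obtain K V where KV: "compact K" "V \<in> VG" "gball p act (inv c) K V \<subseteq> S"
    using S unfolding gauge_open_def gball_def by meson
  have "\<forall>d\<in>gint p act c K V. inv d \<in> S"
  proof
    fix d assume "d \<in> gint p act c K V"
    hence b: "d \<in> gball p act c K V" using gint_sub[OF pb] by blast
    have dG: "d \<in> gauge_group p act" using gball_G b by blast
    have "inv d \<in> gball p act (inv c) K V"
      unfolding gball_iff[OF pb gg_inv[OF G] gg_inv[OF dG]]
    proof (intro allI impI)
      fix z assume z: "p z \<in> K"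
      define w where "w = inv d z"
      have dw: "d w = z" unfolding w_def using gg_basic(1)[OF dG] by metis
      have "p w \<in> K" using z gg_basic(3)[OF dG, of w] dw by simp
      then obtain h where h: "h \<in> V" "c w = act z h"
        using b dw unfolding gball_iff[OF pb G dG] by metis
      have "c (act w (-h)) = act (c w) (-h)" using gg_basic(4)[OF G] by metis
      also have "\<dots> = z" using h(2) ra_act[OF pb] by simp
      finally have "inv c z = act w (-h)" using gg_basic(2)[OF G] by metis
      moreover have "-h \<in> V" using h(1) KV(2) unfolding VG_def by blast
      ultimately show "\<exists>g\<in>V. inv c z = act (inv d z) g" unfolding w_def by blast
    qed
    thus "inv d \<in> S" using KV(3) by blast
  qed
  thus ?thesis using gint_open[OF pb] gint_self[OF G KV(1,2)] by blast
qed

lemma conj_in: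
  assumes pb: "principal_bundle p act" and bG: "b \<in> gauge_group p act"
    and c: "c \<in> gball p act id K V"
  shows "(b \<circ> c) \<circ> inv b \<in> gball p act id K V"
proof -
  have cG: "c \<in> gauge_group p act" using gball_G c by blast
  show ?thesis
    unfolding gball_iff[OF pb gg_id gg_comp[OF gg_comp[OF bG cG] gg_inv[OF bG]]]
  proof (intro allI impI)
    fix z assume z: "p z \<in> K"
    define w where "w = inv b z"
    have bw: "b w = z" unfolding w_def using gg_basic(1)[OF bG] by metis
    have "p w \<in> K" using z gg_basic(3)[OF bG, of w] bw by simp
    then obtain g where g: "g \<in> V" "w = act (c w) g"
      using c unfolding gball_iff[OF pb gg_id cG] by auto
    have "z = act (b (c w)) g" using bw g(2) gg_basic(4)[OF bG] by metis
    thus "\<exists>g\<in>V. id z = act ((b \<circ> c \<circ> inv b) z) g" using g(1) unfolding w_def by auto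
  qed
qed


theorem proposition3p1:
  fixes p :: "'e::topological_space \<Rightarrow> 'x::topological_space"
    and act :: "'e \<Rightarrow> 'g::topological_group_add \<Rightarrow> 'e"
  assumes "SIN_on (euclidean :: 'g topology) (+) uminus 0"
    and "numerable_principal_bundle p act"
  shows "istopology (gauge_open p act) \<and>
         topspace (gauge_topology p act) = gauge_group p act \<and>
         topological_group_on (gauge_topology p act) (\<circ>) inv id \<and>
         SIN_on (gauge_topology p act) (\<circ>) inv id"
proof -
  have pb: "principal_bundle p act" using assms(2) unfolding numerable_principal_bundle_def by blast
  have op: "openin (gauge_topology p act) = gauge_open p act" by (rule gauge_openin)
  have ts: "topspace (gauge_topology p act) = gauge_group p act" by (rule gauge_topspace)
  have mult: "continuous_map (prod_topology (gauge_topology p act) (gauge_topology p act))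
      (gauge_topology p act) (\<lambda>(a, b). a \<circ> b)"
    unfolding continuous_map
  proof (intro conjI allI impI)
    show "(\<lambda>(a, b). a \<circ> b) ` topspace (prod_topology (gauge_topology p act) (gauge_topology p act))
          \<subseteq> topspace (gauge_topology p act)"
      using gg_comp by (auto simp: ts)
    fix U assume "openin (gauge_topology p act) U"
    hence U: "gauge_open p act U" using op by simp
    show "openin (prod_topology (gauge_topology p act) (gauge_topology p act))
      {x \<in> topspace (prod_topology (gauge_topology p act) (gauge_topology p act)). (case x of (a, b) \<Rightarrow> a \<circ> b) \<in> U}"
      unfolding openin_prod_topology_alt
    proof (intro allI impI)
      fix a b assume ab: "(a, b) \<in> {x \<in> topspace (prod_topology (gauge_topology p act) (gauge_topology p act)). (case x of (a, b) \<Rightarrow> a \<circ> b) \<in> U}"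
      hence G: "a \<in> gauge_group p act" "b \<in> gauge_group p act" "a \<circ> b \<in> U" by (auto simp: ts)
      obtain U1 U2 where UU: "gauge_open p act U1" "gauge_open p act U2" "a \<in> U1" "b \<in> U2"
        "\<forall>d1\<in>U1. \<forall>d2\<in>U2. d1 \<circ> d2 \<in> U"
        using comp_nbhd[OF pb G(1,2) U G(3)] by blast
      have "U1 \<subseteq> gauge_group p act" "U2 \<subseteq> gauge_group p act" using UU(1,2) unfolding gauge_open_def by auto
      hence "U1 \<times> U2 \<subseteq> {x \<in> topspace (prod_topology (gauge_topology p act) (gauge_topology p act)). (case x of (a, b) \<Rightarrow> a \<circ> b) \<in> U}"
        using UU(5) by (auto simp: ts)
      thus "\<exists>U' V'. openin (gauge_topology p act) U' \<and> openin (gauge_topology p act) V' \<and>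
          a \<in> U' \<and> b \<in> V' \<and> U' \<times> V' \<subseteq> {x \<in> topspace (prod_topology (gauge_topology p act) (gauge_topology p act)). (case x of (a, b) \<Rightarrow> a \<circ> b) \<in> U}"
      proof -
        have "openin (gauge_topology p act) U1" "openin (gauge_topology p act) U2"
          using UU(1,2) by (simp_all add: op)
        thus ?thesis using UU(3,4) \<open>U1 \<times> U2 \<subseteq> _\<close> by blast
      qed
    qed
  qed
  have invc: "continuous_map (gauge_topology p act) (gauge_topology p act) inv"
    unfolding continuous_map
  proof (intro conjI allI impI)
    show "inv ` topspace (gauge_topology p act) \<subseteq> topspace (gauge_topology p act)"
      using gg_inv by (auto simp: ts)
    fix U assume "openin (gauge_topology p act) U"
    hence U: "gauge_open p act U" using op by simp
    show "openin (gauge_topology p act) {x \<in> topspace (gauge_topology p act). inv x \<in> U}"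
      unfolding op ts
    proof (rule gauge_open_local)
      show "{x \<in> gauge_group p act. inv x \<in> U} \<subseteq> gauge_group p act" by blast
      show "\<forall>c\<in>{x \<in> gauge_group p act. inv x \<in> U}. \<exists>U'. gauge_open p act U' \<and> c \<in> U' \<and> U' \<subseteq> {x \<in> gauge_group p act. inv x \<in> U}"
      proof
        fix c assume c: "c \<in> {x \<in> gauge_group p act. inv x \<in> U}"
        then obtain U' where U': "gauge_open p act U'" "c \<in> U'" "\<forall>d\<in>U'. inv d \<in> U"
          using inv_nbhd[OF pb _ U] by blast
        have "U' \<subseteq> gauge_group p act" using U'(1) unfolding gauge_open_def by auto
        thus "\<exists>U'. gauge_open p act U' \<and> c \<in> U' \<and> U' \<subseteq> {x \<in> gauge_group p act. inv x \<in> U}"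
          using U' by blast
      qed
    qed
  qed
  have grp: "topological_group_on (gauge_topology p act) (\<circ>) inv id"
    unfolding topological_group_on_def ts
  proof (intro conjI ballI)
    show "id \<in> gauge_group p act" by (rule gg_id)
    fix a assume a: "a \<in> gauge_group p act"
    have bij: "bij a" using gg_basic(5)[OF a] .
    show "id \<circ> a = a" "a \<circ> id = a" by auto
    show "inv a \<circ> a = id" using bij by (simp add: bij_is_inj)
    show "a \<circ> inv a = id" by (simp add: fun_eq_iff gg_basic(1)[OF a])
  next
    fix a b c :: "'e \<Rightarrow> 'e"
    show "a \<circ> b \<circ> c = a \<circ> (b \<circ> c)" by (simp add: o_assoc)
  next
    show "continuous_map (prod_topology (gauge_topology p act) (gauge_topology p act))
      (gauge_topology p act) (\<lambda>(a, b). a \<circ> b)" by (rule mult)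
    show "continuous_map (gauge_topology p act) (gauge_topology p act) inv" by (rule invc)
  qed
  have sin: "SIN_on (gauge_topology p act) (\<circ>) inv id"
    unfolding SIN_on_def
  proof (intro allI impI)
    fix N assume "nbhd_of (gauge_topology p act) id N"
    then obtain U where U: "gauge_open p act U" "id \<in> U" "U \<subseteq> N"
      unfolding nbhd_of_def op by blast
    obtain K V where KV: "compact K" "V \<in> VG" "gball p act id K V \<subseteq> U"
      using U(1,2) unfolding gauge_open_def gball_def by meson
    define W where "W = gball p act id K V"
    have "nbhd_of (gauge_topology p act) id W"
      unfolding nbhd_of_def op W_def
      using gint_open[OF pb] gint_self[OF gg_id KV(1,2)] gint_sub[OF pb] by blast
    moreover have "W \<subseteq> N" using KV(3) U(3) unfolding W_def by blast
    moreover have "\<forall>g\<in>topspace (gauge_topology p act). (\<lambda>w. g \<circ> w \<circ> inv g) ` W = W"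
    proof
      fix b assume "b \<in> topspace (gauge_topology p act)"
      hence bG: "b \<in> gauge_group p act" by (simp add: ts)
      have bij: "bij b" using gg_basic(5)[OF bG] .
      show "(\<lambda>w. b \<circ> w \<circ> inv b) ` W = W"
      proof
        show "(\<lambda>w. b \<circ> w \<circ> inv b) ` W \<subseteq> W" unfolding W_def using conj_in[OF pb bG] by blast
        show "W \<subseteq> (\<lambda>w. b \<circ> w \<circ> inv b) ` W"
        proof
          fix c assume c: "c \<in> W"
          have "inv b \<circ> c \<circ> inv (inv b) \<in> W" unfolding W_def
            using conj_in[OF pb gg_inv[OF bG]] c unfolding W_def by blast
          moreover have "inv (inv b) = b" using bij by (simp add: inv_inv_eq)
          moreover have "b \<circ> (inv b \<circ> c \<circ> b) \<circ> inv b = c"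
            by (simp add: fun_eq_iff gg_basic(1)[OF bG])
          ultimately show "c \<in> (\<lambda>w. b \<circ> w \<circ> inv b) ` W" by (metis image_eqI)
        qed
      qed
    qed
    ultimately show "\<exists>W. nbhd_of (gauge_topology p act) id W \<and> W \<subseteq> N \<and>
             (\<forall>g\<in>topspace (gauge_topology p act). (\<lambda>w. g \<circ> w \<circ> inv g) ` W = W)" by blast
  qed
  show ?thesis using gauge_istop ts grp sin by blast
qed

end
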